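(* Consider the risk-averse quantal response mean-field game described in the context, and assume the Lipschitz condition on $f_t$ and $r_t$ stated there. Then there exists a mean-field risk-averse quantal response equilibrium (MF-RQE), i.e. a pair $(\pi^*_{\mathrm{RQE}}, \mathcal{S}^* )$, with $\pi^*_{\mathrm{RQE}}\in\Pi$ and $\mathcal{S}^*$ a set of mean-field flows, such that $\pi^*_{\mathrm{RQE}}\in\mathcal{B}^{\mathrm{RQE}}_{\mathrm{opt}}(\mathcal{S}^* )$ and $\mathcal{B}^{\mathrm{RQE}}_{\mathrm{prop}}(\pi^*_{\mathrm{RQE}})=\mathcal{S}^*$.
   Context: Let $\mathcal{X},\mathcal{U}$ be finite nonempty sets and $T\ge 1$ an integer. For a finite set $E$, $\mathcal{P}(E)$ is the set of probability vectors on $E$ and $d_{TV}(\mu,\mu')=\frac12\|\mu-\mu'\|_1$. For each $t\in\{0,\dots,T-1\}$ there are a transition kernel $f_t(x'\mid x,u,\mu)$ (a probability distribution over $x'\in\mathcal{X}$ for each $x\in\mathcal{X},u\in\mathcal{U},\mu\in\mathcal{P}(\mathcal{X})$) and a reward $r_t:\mathcal{X}\times\mathcal{U}\times\mathcal{P}(\mathcal{X})\to[-R_{\max},R_{\max}]$. Lipschitz condition: there are $L_f,L_r>0$ with $\sum_{x'}|f_t(x'\mid x,u,\mu)-f_t(x'\mid x,u,\mu')|\le L_f d_{TV}(\mu,\mu')$ and $|r_t(x,u,\mu)-r_t(x,u,\mu')|\le L_r d_{TV}(\mu,\mu')$ for all $x,u,\mu,\mu',t$. A (Markov, identical for all agents)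 policy is $\pi=(\pi_0,\dots,\pi_{T-1})$ with $\pi_t(\cdot\mid x)\in\mathcal{P}(\mathcal{U})$ for all $x$; $\Pi_t$ is the set of time-$t$ decision rules and $\Pi$ the set of policies. Given $\pi$ and $\mu_0\in\mathcal{P}(\mathcal{X})$, the mean-field flow $\mu=(\mu_0,\dots,\mu_T)$ is defined by $\mu_{t+1}(x')=\sum_{x}\sum_{u}f_t(x'\mid x,u,\mu_t)\pi_t(u\mid x)\mu_t(x)$. For a flow $\mu$ and policy $\pi$: $Q^\pi_{\mu,T-1}(x,u)=r_{T-1}(x,u,\mu_{T-1})$, and for $t<T-1$, $Q^\pi_{\mu,t}(x,u)=r_t(x,u,\mu_t)+\sum_{x'}f_t(x'\mid x,u,\mu_t)V^\pi_{\mu,t+1}(x')$, where $V^\pi_{\mu,t}(x)=\sum_u\pi_t(u\mid x)Q^\pi_{\mu,t}(x,u)$. Risk and rationality data: a finite set $\mathbb{M}=\{\mu_0^1,\dots,\mu_0^K\}\subset\mathcal{P}(\mathcal{X})$ of initial distributions with probabilities $w_k=\Gamma^*(\mu_0^k)$, $\Gamma^*\in\mathcal{P}(\mathbb{M})$; a risk parameter $\tau>0$; a rationality parameter $\alpha>0$; and a regularizer $\nu:\mathcal{P}(\mathcal{U})\to\mathbb{R}$ that is strictly convex and continuous. A set of flows is $\mathcal{S}=\{\mu^1,\dots,\mu^K\}$ where $\mu^k$ is a mean-field flow with initial distribution $\mu_0^k$. For $t$, $x$, $\pi\in\Pi$ and $\mathcal{S}$, define $c_t^{\pi,\alpha}(x;\mathcal{S})=\frac1\tau\log\Big(\sum_{k=1}^K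 w_k\exp\big(-\tau\sum_{u}\pi_t(u\mid x)Q^\pi_{\mu^k,t}(x,u)\big)\Big)+\alpha\,\nu(\pi_t(\cdot\mid x))$. For $\pi'_t\in\Pi_t$, $(\pi'_t,\pi_{-t})$ denotes $\pi$ with its time-$t$ component replaced by $\pi'_t$. $\mathcal{B}^{\mathrm{RQE}}_{\mathrm{opt}}(\mathcal{S})$ is the set of $\pi\in\Pi$ such that for all $t\in\{0,\dots,T-1\}$ and $x\in\mathcal{X}$, $\pi_t(\cdot\mid x)$ minimizes $c_t^{(\pi'_t,\pi_{-t}),\alpha}(x;\mathcal{S})$ over $\pi'_t\in\Pi_t$. $\mathcal{B}^{\mathrm{RQE}}_{\mathrm{prop}}(\pi)$ is the set of flows $\{\mu^1,\dots,\mu^K\}$ where $\mu^k$ is generated by $\pi$ from $\mu_0^k$. *)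

theory Defs
  imports "HOL-Analysis.Analysis"
begin

definition pdist :: "('a::finite \<Rightarrow> real) set" where
  "pdist = {p. (\<forall>a. 0 \<le> p a) \<and> (\<Sum>a\<in>UNIV. p a) = 1}"

definition dTV :: "('a::finite \<Rightarrow> real) \<Rightarrow> ('a \<Rightarrow> real) \<Rightarrow> real" where
  "dTV \<mu> \<mu>' = (1/2) * (\<Sum>a\<in>UNIV. \<bar>\<mu> a - \<mu>' a\<bar>)"

text \<open>Kernels: f t x u \<mu> x' ;  rewards: r t x u \<mu> ;  policies: \<pi> t x u.\<close>

definition decision_rule :: "('x::finite \<Rightarrow> 'u::finite \<Rightarrow> real) \<Rightarrow> bool" where
  "decision_rule d \<longleftrightarrow> (\<forall>x. d x \<in> pdist)"

definition policy :: "nat \<Rightarrow> (nat \<Rightarrow> 'x::finite \<Rightarrow> 'u::finite \<Rightarrow> real) \<Rightarrow> bool" where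
  "policy T \<pi> \<longleftrightarrow> (\<forall>t<T. decision_rule (\<pi> t))"

primrec mf_flow :: "(nat \<Rightarrow> 'x::finite \<Rightarrow> 'u::finite \<Rightarrow> ('x \<Rightarrow> real) \<Rightarrow> 'x \<Rightarrow> real)
    \<Rightarrow> (nat \<Rightarrow> 'x \<Rightarrow> 'u \<Rightarrow> real) \<Rightarrow> ('x \<Rightarrow> real) \<Rightarrow> nat \<Rightarrow> 'x \<Rightarrow> real" where
  "mf_flow f \<pi> \<mu>0 0 = \<mu>0"
| "mf_flow f \<pi> \<mu>0 (Suc t) = (\<lambda>x'. \<Sum>x\<in>UNIV. \<Sum>u\<in>UNIV.
      f t x u (mf_flow f \<pi> \<mu>0 t) x' * \<pi> t x u * mf_flow f \<pi> \<mu>0 t x)"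

text \<open>Q-function computed backwards; the nat argument k is the number of remaining
  steps after t, so the Q-function at time t (horizon T) is Qk ... t (T - 1 - t).\<close>
primrec Qk :: "(nat \<Rightarrow> 'x::finite \<Rightarrow> 'u::finite \<Rightarrow> ('x \<Rightarrow> real) \<Rightarrow> 'x \<Rightarrow> real)
    \<Rightarrow> (nat \<Rightarrow> 'x \<Rightarrow> 'u \<Rightarrow> ('x \<Rightarrow> real) \<Rightarrow> real)
    \<Rightarrow> (nat \<Rightarrow> 'x \<Rightarrow> 'u \<Rightarrow> real) \<Rightarrow> (nat \<Rightarrow> 'x \<Rightarrow> real) \<Rightarrow> nat \<Rightarrow> nat \<Rightarrow> 'x \<Rightarrow> 'u \<Rightarrow> real" where
  "Qk f r \<pi> \<mu> t 0 x u = r t x u (\<mu> t)"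
| "Qk f r \<pi> \<mu> t (Suc k) x u = r t x u (\<mu> t) +
     (\<Sum>x'\<in>UNIV. f t x u (\<mu> t) x' * (\<Sum>u'\<in>UNIV. \<pi> (Suc t) x' u' * Qk f r \<pi> \<mu> (Suc t) k x' u'))"

definition Qfun where
  "Qfun T f r \<pi> \<mu> t x u = Qk f r \<pi> \<mu> t (T - 1 - t) x u"

text \<open>Risk-averse quantal cost c_t^{\<pi>,\<alpha>}(x; S); the set of flows S is indexed by k < K.\<close>
definition rqe_cost where
  "rqe_cost T f r K w \<tau> \<alpha> \<nu> t x \<pi> S =
     (1/\<tau>) * ln (\<Sum>k<K. w k * exp (- \<tau> * (\<Sum>u\<in>UNIV. \<pi> t x u * Qfun T f r \<pi> (S k) t x u)))
     + \<alpha> * \<nu> (\<pi> t x)"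

definition B_opt where
  "B_opt T f r K w \<tau> \<alpha> \<nu> S = {\<pi>. policy T \<pi> \<and>
     (\<forall>t<T. \<forall>x. \<forall>d. decision_rule d \<longrightarrow>
        rqe_cost T f r K w \<tau> \<alpha> \<nu> t x \<pi> S \<le> rqe_cost T f r K w \<tau> \<alpha> \<nu> t x (\<pi>(t := d)) S)}"

definition B_prop where
  "B_prop f K \<mu>0 \<pi> = (\<lambda>k. if k < K then mf_flow f \<pi> (\<mu>0 k) else undefined)"

end

theory Submission
  imports Defs
begin

lemma tendsto_fun_iff:
  fixes X :: "'b \<Rightarrow> 'a \<Rightarrow> 'c::topological_space"
  shows "(X \<longlongrightarrow> l) F \<longleftrightarrow> (\<forall>i. ((\<lambda>k. X k i) \<longlongrightarrow> l i) F)"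
proof -
  have "(X \<longlongrightarrow> l) F \<longleftrightarrow> limitin (product_topology (\<lambda>i. euclidean) UNIV) X l F"
    by (simp add: euclidean_product_topology)
  also have "\<dots> \<longleftrightarrow> (\<forall>i. ((\<lambda>k. X k i) \<longlongrightarrow> l i) F)"
    by (simp add: limitin_componentwise)
  finally show ?thesis .
qed

lemma bw_finite:
  fixes X :: "nat \<Rightarrow> 'a \<Rightarrow> real"
  assumes "finite A" and bd: "\<And>k a. a \<in> A \<Longrightarrow> \<bar>X k a\<bar> \<le> B"
  shows "\<exists>h l. strict_mono h \<and> (\<forall>a\<in>A. (\<lambda>k. X (h k) a) \<longlonglongrightarrow> l a)"
  using assms(1) bd
proof (induction A rule: finite_induct)
  case empty
  show ?case by (rule exI[of _ id]) (auto simp: strict_mono_def)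
next
  case (insert a A)
  then obtain h l where h: "strict_mono h" "\<forall>b\<in>A. (\<lambda>k. X (h k) b) \<longlonglongrightarrow> l b" by blast
  have "bounded (range (\<lambda>k. X (h k) a))"
    using insert.prems by (intro boundedI[of _ B]) auto
  then obtain la r where r: "strict_mono r" "((\<lambda>k. X (h k) a) \<circ> r) \<longlonglongrightarrow> la"
    using bounded_imp_convergent_subsequence by blast
  show ?case
  proof (intro exI conjI ballI)
    show "strict_mono (h \<circ> r)" using h r by (simp add: strict_mono_o)
    fix b assume "b \<in> insert a A"
    then show "(\<lambda>k. X ((h \<circ> r) k) b) \<longlonglongrightarrow> (l(a := la)) b"
    proof
      assume "b = a" then show ?thesis using r by (simp add: o_def)
    next
      assume b: "b \<in> A"
      with insert have "b \<noteq> a" by auto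
      have "((\<lambda>k. X (h k) b) \<circ> r) \<longlonglongrightarrow> l b"
        using LIMSEQ_subseq_LIMSEQ h b r by blast
      then show ?thesis using \<open>b \<noteq> a\<close> by (simp add: o_def)
    qed
  qed
qed

lemma lab_lemma:
  fixes y fy :: real and l :: nat
  shows "True" by simp

lemma brouwer_nat:
  fixes F :: "(nat \<Rightarrow> real) \<Rightarrow> (nat \<Rightarrow> real)" and n :: nat and C
  defines "C \<equiv> {y. \<forall>i<n. 0 \<le> y i \<and> y i \<le> 1}"
  assumes maps: "\<And>y. y \<in> C \<Longrightarrow> F y \<in> C"
    and cont: "\<And>Y z i. (\<And>k. Y k \<in> C) \<Longrightarrow> z \<in> C \<Longrightarrow> (\<And>j. j < n \<Longrightarrow> (\<lambda>k. Y k j) \<longlonglongrightarrow> z j)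
        \<Longrightarrow> i < n \<Longrightarrow> \<exists>h. strict_mono h \<and> (\<lambda>k. F (Y (h k)) i) \<longlonglongrightarrow> F z i"
  shows "\<exists>z\<in>C. \<forall>i<n. F z i = z i"
proof -
  define grid :: "nat \<Rightarrow> (nat \<Rightarrow> nat) \<Rightarrow> nat \<Rightarrow> real" where
    "grid p x = (\<lambda>j. real (x j) / real p)" for p x
  define lab :: "nat \<Rightarrow> (nat \<Rightarrow> nat) \<Rightarrow> nat \<Rightarrow> nat" where
    "lab p x i = (if x i = 0 then 0 else if x i = p then 1
        else if grid p x i \<le> F (grid p x) i then 0 else 1)" for p x i
  have gridC: "grid p x \<in> C" if "0 < p" "\<forall>i<n. x i \<le> p" for p x
    using that by (auto simp: C_def grid_def)
  have lab0: "grid p x i \<le> F (grid p x) i" if "0 < p" "\<forall>i<n. x i \<le> p" "i < n" "lab p x i = 0" for p x i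
  proof -
    have "F (grid p x) \<in> C" using maps gridC that by blast
    then show ?thesis using that by (auto simp: lab_def grid_def C_def split: if_splits)
  qed
  have lab1: "F (grid p x) i \<le> grid p x i" if "0 < p" "\<forall>i<n. x i \<le> p" "i < n" "lab p x i = 1" for p x i
  proof -
    have "F (grid p x) \<in> C" using maps gridC that by blast
    then show ?thesis using that by (auto simp: lab_def grid_def C_def split: if_splits)
  qed
  have labb: "lab p x i = 0 \<or> lab p x i = 1" for p x i by (simp add: lab_def)
  define G where "G m q r s i \<longleftrightarrow> (\<forall>j<n. q j \<le> r j \<and> r j \<le> q j + 1) \<and>
        (\<forall>j<n. q j \<le> s j \<and> s j \<le> q j + 1) \<and> lab (Suc m) r i \<noteq> lab (Suc m) s i"
    for m q r s i
  have "\<forall>m. \<exists>q. (\<forall>i<n. q i < Suc m) \<and> (\<forall>i<n. \<exists>r s. G m q r s i)"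
  proof
    fix m
    obtain q where "\<forall>i<n. q i < Suc m" "\<forall>i<n. \<exists>r s. (\<forall>j<n. q j \<le> r j \<and> r j \<le> q j + 1) \<and>
        (\<forall>j<n. q j \<le> s j \<and> s j \<le> q j + 1) \<and> lab (Suc m) r i \<noteq> lab (Suc m) s i"
    proof (rule kuhn_lemma[of "Suc m" n "lab (Suc m)"])
      show "\<forall>x. (\<forall>i<n. x i \<le> Suc m) \<longrightarrow> (\<forall>i<n. lab (Suc m) x i = 0 \<or> lab (Suc m) x i = 1)"
        using labb by blast
      show "\<forall>x. (\<forall>i<n. x i \<le> Suc m) \<longrightarrow> (\<forall>i<n. x i = 0 \<longrightarrow> lab (Suc m) x i = 0)"
        by (simp add: lab_def)
      show "\<forall>x. (\<forall>i<n. x i \<le> Suc m) \<longrightarrow> (\<forall>i<n. x i = Suc m \<longrightarrow> lab (Suc m) x i = 1)"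
        by (simp add: lab_def)
    qed auto
    then show "\<exists>q. (\<forall>i<n. q i < Suc m) \<and> (\<forall>i<n. \<exists>r s. G m q r s i)"
      unfolding G_def by blast
  qed
  then obtain Q where QQ: "\<forall>m. (\<forall>i<n. Q m i < Suc m) \<and> (\<forall>i<n. \<exists>r s. G m (Q m) r s i)"
    by (rule choice[THEN exE])
  then have Q: "\<And>m i. i < n \<Longrightarrow> Q m i < Suc m" by blast
  have "\<forall>m. \<forall>i. \<exists>rs. i < n \<longrightarrow> G m (Q m) (fst rs) (snd rs) i"
    using QQ by force
  then have "\<forall>m. \<exists>RS. \<forall>i. i < n \<longrightarrow> G m (Q m) (fst (RS i)) (snd (RS i)) i"
    by (intro allI choice) blast
  then obtain RS' where RS': "\<forall>m. \<forall>i. i < n \<longrightarrow> G m (Q m) (fst (RS' m i)) (snd (RS' m i)) i"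
    by (rule choice[THEN exE])
  define R where "R m i = fst (RS' m i)" for m i
  define S where "S m i = snd (RS' m i)" for m i
  have RS: "\<And>m i. i < n \<Longrightarrow> (\<forall>j<n. Q m j \<le> R m i j \<and> R m i j \<le> Q m j + 1) \<and>
        (\<forall>j<n. Q m j \<le> S m i j \<and> S m i j \<le> Q m j + 1) \<and> lab (Suc m) (R m i) i \<noteq> lab (Suc m) (S m i) i"
    using RS' unfolding R_def S_def G_def by blast
  define Z where "Z m = grid (Suc m) (Q m)" for m
  have ZC: "Z m \<in> C" for m
    unfolding Z_def by (rule gridC) (use Q in \<open>auto intro: less_imp_le\<close>)
  obtain h l where h: "strict_mono h" and hl: "\<forall>j\<in>{..<n}. (\<lambda>k. Z (h k) j) \<longlonglongrightarrow> l j"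
    using bw_finite[of "{..<n}" Z 1] ZC by (fastforce simp: C_def)
  have lC: "l \<in> C"
  proof -
    have "0 \<le> l j \<and> l j \<le> 1" if "j < n" for j
    proof
      show "0 \<le> l j"
        by (rule LIMSEQ_le_const[OF hl[rule_format]]) (use ZC that in \<open>auto simp: C_def\<close>)
      show "l j \<le> 1"
        by (rule LIMSEQ_le_const2[OF hl[rule_format]]) (use ZC that in \<open>auto simp: C_def\<close>)
    qed
    then show ?thesis by (simp add: C_def)
  qed
  have inv0: "(\<lambda>k. 1 / real (Suc (h k))) \<longlonglongrightarrow> 0"
  proof -
    have "(\<lambda>k. inverse (real (Suc k))) \<longlonglongrightarrow> 0" by (rule LIMSEQ_inverse_real_of_nat)
    then have "((\<lambda>k. inverse (real (Suc k))) \<circ> h) \<longlonglongrightarrow> 0" using h by (rule LIMSEQ_subseq_LIMSEQ)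
    then show ?thesis by (simp add: o_def divide_inverse)
  qed
  have near: "(\<lambda>k. grid (Suc (h k)) (W (h k)) j) \<longlonglongrightarrow> l j"
    if W: "\<And>m. \<forall>j<n. Q m j \<le> W m j \<and> W m j \<le> Q m j + 1" and j: "j < n" for W j
  proof -
    have "(\<lambda>k. Z (h k) j + (grid (Suc (h k)) (W (h k)) j - Z (h k) j)) \<longlonglongrightarrow> l j + 0"
    proof (rule tendsto_add)
      show "(\<lambda>k. Z (h k) j) \<longlonglongrightarrow> l j" using hl j by auto
      show "(\<lambda>k. grid (Suc (h k)) (W (h k)) j - Z (h k) j) \<longlonglongrightarrow> 0"
      proof (rule tendsto_sandwich[of "\<lambda>_. 0" _ _ "\<lambda>k. 1 / real (Suc (h k))"])
        have a: "real (Q m j) \<le> real (W m j)" "real (W m j) - real (Q m j) \<le> 1" for m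
          using W[of m] j by auto
        have e: "grid (Suc m) (W m) j - Z m j = (real (W m j) - real (Q m j)) / real (Suc m)" for m
          by (simp add: Z_def grid_def diff_divide_distrib)
        show "\<forall>\<^sub>F k in sequentially. 0 \<le> grid (Suc (h k)) (W (h k)) j - Z (h k) j"
          using a by (intro always_eventually allI) (simp add: e)
        show "\<forall>\<^sub>F k in sequentially. grid (Suc (h k)) (W (h k)) j - Z (h k) j \<le> 1 / real (Suc (h k))"
          using a by (intro always_eventually allI) (simp only: e divide_right_mono of_nat_0_le_iff)
      qed (use inv0 in simp_all)
    qed
    then show ?thesis by simp
  qed
  have Wgrid: "grid (Suc m) W' \<in> C" if "\<forall>j<n. Q m j \<le> W' j \<and> W' j \<le> Q m j + 1" for m W'
  proof (rule gridC)
    show "\<forall>i<n. W' i \<le> Suc m" using that Q by (metis Suc_eq_plus1 Suc_le_eq add_le_mono1 le_trans)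
  qed simp
  have "\<forall>i<n. F l i = l i"
  proof (intro allI impI)
    fix i assume i: "i < n"
    define Rv where "Rv k = grid (Suc (h k)) (R (h k) i)" for k
    define Sv where "Sv k = grid (Suc (h k)) (S (h k) i)" for k
    have RvC: "Rv k \<in> C" for k unfolding Rv_def by (rule Wgrid) (use RS i in blast)
    have SvC: "Sv k \<in> C" for k unfolding Sv_def by (rule Wgrid) (use RS i in blast)
    have Rvl: "(\<lambda>k. Rv k j) \<longlonglongrightarrow> l j" if "j < n" for j
      unfolding Rv_def by (rule near[of "\<lambda>m. R m i"]) (use RS i that in auto)
    have Svl: "(\<lambda>k. Sv k j) \<longlonglongrightarrow> l j" if "j < n" for j
      unfolding Sv_def by (rule near[of "\<lambda>m. S m i"]) (use RS i that in auto)
    obtain h1 where h1: "strict_mono h1" "(\<lambda>k. F (Rv (h1 k)) i) \<longlonglongrightarrow> F l i"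
      using cont[of Rv l i] RvC lC Rvl i by blast
    have Svl1: "(\<lambda>k. Sv (h1 k) j) \<longlonglongrightarrow> l j" if "j < n" for j
      using LIMSEQ_subseq_LIMSEQ[OF Svl[OF that] h1(1)] by (simp add: o_def)
    obtain h2 where h2: "strict_mono h2" "(\<lambda>k. F (Sv (h1 (h2 k))) i) \<longlonglongrightarrow> F l i"
      using cont[of "\<lambda>k. Sv (h1 k)" l i] SvC lC Svl1 i by blast
    define A where "A k = F (Rv (h1 (h2 k))) i - Rv (h1 (h2 k)) i" for k
    define B where "B k = F (Sv (h1 (h2 k))) i - Sv (h1 (h2 k)) i" for k
    have "(\<lambda>k. Rv (h1 k) i) \<longlonglongrightarrow> l i"
      using LIMSEQ_subseq_LIMSEQ[OF Rvl[OF i] h1(1)] by (simp add: o_def)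
    then have "(\<lambda>k. Rv (h1 (h2 k)) i) \<longlonglongrightarrow> l i"
      using LIMSEQ_subseq_LIMSEQ[OF _ h2(1)] by (simp add: o_def)
    moreover have "(\<lambda>k. F (Rv (h1 (h2 k))) i) \<longlonglongrightarrow> F l i"
      using LIMSEQ_subseq_LIMSEQ[OF h1(2) h2(1)] by (simp add: o_def)
    ultimately have A: "A \<longlonglongrightarrow> F l i - l i" unfolding A_def by (intro tendsto_diff)
    have "(\<lambda>k. Sv (h1 (h2 k)) i) \<longlonglongrightarrow> l i"
      using LIMSEQ_subseq_LIMSEQ[OF Svl1[OF i] h2(1)] by (simp add: o_def)
    then have B: "B \<longlonglongrightarrow> F l i - l i" unfolding B_def using h2(2) by (intro tendsto_diff)
    have AB: "min (A k) (B k) \<le> 0 \<and> 0 \<le> max (A k) (B k)" for k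
    proof -
      define m where "m = h (h1 (h2 k))"
      have r: "\<forall>j<n. R m i j \<le> Suc m" and s: "\<forall>j<n. S m i j \<le> Suc m"
        using RS[OF i, of m] Q by (metis Suc_eq_plus1 Suc_le_eq add_le_mono1 le_trans)+
      have d: "lab (Suc m) (R m i) i \<noteq> lab (Suc m) (S m i) i" using RS[OF i] by blast
      have Ak: "A k = F (grid (Suc m) (R m i)) i - grid (Suc m) (R m i) i"
        by (simp add: A_def Rv_def m_def)
      have Bk: "B k = F (grid (Suc m) (S m i)) i - grid (Suc m) (S m i) i"
        by (simp add: B_def Sv_def m_def)
      show ?thesis
        using labb[of "Suc m" "R m i" i] labb[of "Suc m" "S m i" i] d
          lab0[OF _ r i] lab1[OF _ r i] lab0[OF _ s i] lab1[OF _ s i]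
        unfolding Ak Bk by auto
    qed
    have "(\<lambda>k. min (A k) (B k)) \<longlonglongrightarrow> min (F l i - l i) (F l i - l i)"
      by (intro tendsto_min A B)
    then have "(\<lambda>k. min (A k) (B k)) \<longlonglongrightarrow> F l i - l i" by simp
    then have 1: "F l i - l i \<le> 0"
      by (rule LIMSEQ_le_const2) (use AB in auto)
    have "(\<lambda>k. max (A k) (B k)) \<longlonglongrightarrow> max (F l i - l i) (F l i - l i)"
      by (intro tendsto_max A B)
    then have "(\<lambda>k. max (A k) (B k)) \<longlonglongrightarrow> F l i - l i" by simp
    then have 2: "0 \<le> F l i - l i"
      by (rule LIMSEQ_le_const) (use AB in auto)
    show "F l i = l i" using 1 2 by simp
  qed
  then show ?thesis using lC by blast
qed

lemma pdist_nonneg: "p \<in> pdist \<Longrightarrow> 0 \<le> p u"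
  by (simp add: pdist_def)

lemma pdist_sum: "p \<in> pdist \<Longrightarrow> (\<Sum>u\<in>UNIV. p u) = 1"
  by (simp add: pdist_def)

lemma pdist_le1: "p \<in> pdist \<Longrightarrow> p u \<le> 1"
proof -
  assume p: "p \<in> pdist"
  have "p u \<le> (\<Sum>v\<in>UNIV. p v)"
    by (rule member_le_sum) (auto simp: pdist_nonneg[OF p])
  then show ?thesis using pdist_sum[OF p] by simp
qed

lemma compact_pdist: "compact (pdist :: ('u::finite \<Rightarrow> real) set)"
proof -
  have "compactin (product_topology (\<lambda>_. euclidean) UNIV) (PiE (UNIV::'u set) (\<lambda>_. {0::real..1}))"
    by (simp add: compactin_PiE)
  then have c: "compact (PiE (UNIV::'u set) (\<lambda>_. {0::real..1}))"
    by (simp add: euclidean_product_topology)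
  have cl: "closed {p::'u \<Rightarrow> real. (\<Sum>u\<in>UNIV. p u) = 1}"
  proof -
    have "continuous_on UNIV (\<lambda>p::'u\<Rightarrow>real. \<Sum>u\<in>UNIV. p u)"
      by (rule continuous_on_sum) (rule continuous_on_product_coordinates)
    then show ?thesis by (rule closed_Collect_eq[OF _ continuous_on_const])
  qed
  have "pdist = PiE (UNIV::'u set) (\<lambda>_. {0::real..1}) \<inter> {p. (\<Sum>u\<in>UNIV. p u) = 1}"
  proof (intro equalityI subsetI)
    fix p :: "'u \<Rightarrow> real" assume p: "p \<in> pdist"
    then show "p \<in> PiE (UNIV::'u set) (\<lambda>_. {0::real..1}) \<inter> {p. (\<Sum>u\<in>UNIV. p u) = 1}"
      by (simp add: PiE_UNIV_domain Pi_iff pdist_nonneg pdist_le1 pdist_sum)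
  next
    fix p :: "'u \<Rightarrow> real" assume "p \<in> PiE (UNIV::'u set) (\<lambda>_. {0::real..1}) \<inter> {p. (\<Sum>u\<in>UNIV. p u) = 1}"
    then show "p \<in> pdist" by (simp add: PiE_UNIV_domain Pi_iff pdist_def)
  qed
  then show ?thesis using compact_Int_closed[OF c cl] by simp
qed

lemma sq_exp_lem: "0 \<le> (a::real) \<Longrightarrow> (sqrt a * exp (x/2))\<^sup>2 = a * exp x"
proof -
  assume a: "0 \<le> a"
  have "(sqrt a * exp (x/2))\<^sup>2 = (sqrt a)\<^sup>2 * (exp (x/2) * exp (x/2))"
    by (simp add: power_mult_distrib power2_eq_square)
  also have "\<dots> = a * (exp (x/2) * exp (x/2))" using a by simp
  also have "exp (x/2) * exp (x/2) = exp x" by (simp flip: exp_add)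
  then have "a * (exp (x/2) * exp (x/2)) = a * exp x" by simp
  finally show ?thesis .
qed

lemma tendsto_pdist_closed:
  assumes "\<And>m. P m \<in> pdist" "\<And>u. (\<lambda>m. P m u) \<longlonglongrightarrow> l u"
  shows "l \<in> pdist"
proof -
  have nn: "0 \<le> l u" for u
    by (rule LIMSEQ_le_const[OF assms(2)]) (use assms(1) pdist_nonneg in blast)
  have t: "(\<lambda>m. \<Sum>u\<in>UNIV. P m u) \<longlonglongrightarrow> (\<Sum>u\<in>UNIV. l u)"
    by (intro tendsto_sum assms(2))
  have e: "(\<lambda>m. \<Sum>u\<in>UNIV. P m u) = (\<lambda>m. 1)"
    by (intro ext) (simp add: pdist_sum[OF assms(1)])
  have "(\<lambda>m. 1::real) \<longlonglongrightarrow> (\<Sum>u\<in>UNIV. l u)" using t unfolding e .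
  then have "(\<Sum>u\<in>UNIV. l u) = 1"
    using LIMSEQ_unique tendsto_const by metis
  then show ?thesis using nn by (simp add: pdist_def)
qed

locale rq =
  fixes K :: nat and w :: "nat \<Rightarrow> real" and \<tau> \<alpha> :: real and \<nu> :: "('u::finite \<Rightarrow> real) \<Rightarrow> real"
  assumes w_nonneg: "\<And>k. k < K \<Longrightarrow> w k \<ge> 0"
    and w_sum: "(\<Sum>k<K. w k) = 1"
    and tau: "\<tau> > 0" and alpha: "\<alpha> > 0"
    and nu_strict_convex: "\<And>p q a. p \<in> pdist \<Longrightarrow> q \<in> pdist \<Longrightarrow> p \<noteq> q \<Longrightarrow> 0 < a \<Longrightarrow> a < 1 \<Longrightarrow>
        \<nu> (\<lambda>u. a * p u + (1 - a) * q u) < a * \<nu> p + (1 - a) * \<nu> q"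
    and nu_cont: "continuous_on pdist \<nu>"
begin

definition LS :: "(nat \<Rightarrow> 'u \<Rightarrow> real) \<Rightarrow> ('u \<Rightarrow> real) \<Rightarrow> real" where
  "LS c p = (\<Sum>k<K. w k * exp (- \<tau> * (\<Sum>u\<in>UNIV. p u * c k u)))"

definition Phi :: "(nat \<Rightarrow> 'u \<Rightarrow> real) \<Rightarrow> ('u \<Rightarrow> real) \<Rightarrow> real" where
  "Phi c p = (1/\<tau>) * ln (LS c p) + \<alpha> * \<nu> p"

lemma LS_pos: "LS c p > 0"
proof -
  obtain k where k: "k < K" "w k > 0"
  proof -
    have "\<exists>k<K. w k > 0"
    proof (rule ccontr)
      assume "\<not> ?thesis"
      then have "\<And>k. k < K \<Longrightarrow> w k \<le> 0" by (meson not_less)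
      then have "(\<Sum>k<K. w k) \<le> 0" by (intro sum_nonpos) simp
      then show False using w_sum by simp
    qed
    then show ?thesis using that by blast
  qed
  show ?thesis unfolding LS_def
    by (rule sum_pos2[of _ k]) (use k w_nonneg in auto)
qed

lemma LS_ne: "LS c p \<noteq> 0"
  using LS_pos[of c p] by linarith

lemma Phi_cont: "continuous_on pdist (Phi c)"
proof -
  have "continuous_on pdist (LS c)"
    unfolding LS_def by (intro continuous_intros) (auto intro: continuous_on_subset[OF continuous_on_product_coordinates])
  then have L: "continuous_on pdist (\<lambda>p. ln (LS c p))"
    by (intro continuous_on_ln) (simp_all add: LS_ne)
  show ?thesis unfolding Phi_def
    by (intro continuous_on_add continuous_on_mult continuous_on_const L nu_cont)
qed

lemma Phi_min_ex: "\<exists>p\<in>pdist. \<forall>q\<in>pdist. Phi c p \<le> Phi c q"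
proof (rule continuous_attains_inf[OF compact_pdist _ Phi_cont])
  have "(\<lambda>u. if u = undefined then 1 else 0 :: real) \<in> pdist"
    by (simp add: pdist_def)
  then show "pdist \<noteq> {}" by blast
qed

lemma LS_mid:
  assumes p: "p \<in> pdist" and q: "q \<in> pdist"
  shows "ln (LS c (\<lambda>u. 1/2 * p u + (1 - 1/2) * q u)) \<le> 1/2 * ln (LS c p) + 1/2 * ln (LS c q)"
proof -
  define A where "A k = - \<tau> * (\<Sum>u\<in>UNIV. p u * c k u)" for k
  define B where "B k = - \<tau> * (\<Sum>u\<in>UNIV. q u * c k u)" for k
  have m: "- \<tau> * (\<Sum>u\<in>UNIV. (1/2 * p u + (1 - 1/2) * q u) * c k u) = A k / 2 + B k / 2" for k
    by (simp add: A_def B_def algebra_simps sum.distrib sum_divide_distrib sum_distrib_left)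
  have LSm: "LS c (\<lambda>u. 1/2 * p u + (1 - 1/2) * q u) = (\<Sum>k<K. (sqrt (w k) * exp (A k / 2)) * (sqrt (w k) * exp (B k / 2)))"
    unfolding LS_def m
    by (intro sum.cong refl) (use w_nonneg in \<open>simp add: exp_add real_sqrt_mult[symmetric]\<close>)
  have sqA: "(sqrt (w k) * exp (A k / 2))\<^sup>2 = w k * exp (A k)" if "k < K" for k
    using w_nonneg[OF that] by (rule sq_exp_lem)
  have sqB: "(sqrt (w k) * exp (B k / 2))\<^sup>2 = w k * exp (B k)" if "k < K" for k
    using w_nonneg[OF that] by (rule sq_exp_lem)
  have LSp: "LS c p = (\<Sum>k<K. (sqrt (w k) * exp (A k / 2))\<^sup>2)"
    unfolding LS_def A_def[symmetric] by (intro sum.cong refl) (simp add: sqA)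
  have LSq: "LS c q = (\<Sum>k<K. (sqrt (w k) * exp (B k / 2))\<^sup>2)"
    unfolding LS_def B_def[symmetric] by (intro sum.cong refl) (simp add: sqB)
  have "(LS c (\<lambda>u. 1/2 * p u + (1 - 1/2) * q u))\<^sup>2 \<le> LS c p * LS c q"
    unfolding LSm LSp LSq by (rule Cauchy_Schwarz_ineq_sum)
  then have "ln ((LS c (\<lambda>u. 1/2 * p u + (1 - 1/2) * q u))\<^sup>2) \<le> ln (LS c p * LS c q)"
    using LS_pos[of c p] LS_pos[of c q] LS_ne[of c "\<lambda>u. 1/2 * p u + (1 - 1/2) * q u"] by (subst ln_le_cancel_iff) auto
  then show ?thesis
    using LS_ne[of c p] LS_ne[of c q] by (simp add: ln_mult ln_realpow)
qed

lemma Phi_unique: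
  assumes p: "p \<in> pdist" and q: "q \<in> pdist"
    and pm: "\<forall>r\<in>pdist. Phi c p \<le> Phi c r" and qm: "\<forall>r\<in>pdist. Phi c q \<le> Phi c r"
  shows "p = q"
proof (rule ccontr)
  assume ne: "p \<noteq> q"
  define m where "m = (\<lambda>u. 1/2 * p u + (1 - 1/2) * q u)"
  have mp: "m \<in> pdist"
    using p q by (auto simp: pdist_def m_def sum.distrib simp flip: sum_divide_distrib)
  have nu: "\<nu> m < 1/2 * \<nu> p + (1 - 1/2) * \<nu> q"
    unfolding m_def by (rule nu_strict_convex[OF p q ne]) auto
  have ls: "ln (LS c m) \<le> 1/2 * ln (LS c p) + 1/2 * ln (LS c q)"
    unfolding m_def by (rule LS_mid[OF p q])
  have "Phi c m < 1/2 * Phi c p + 1/2 * Phi c q"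
  proof -
    have "(1/\<tau>) * ln (LS c m) \<le> (1/\<tau>) * (1/2 * ln (LS c p) + 1/2 * ln (LS c q))"
      using ls tau by (intro mult_left_mono) auto
    moreover have "\<alpha> * \<nu> m < \<alpha> * (1/2 * \<nu> p + (1 - 1/2) * \<nu> q)"
      using nu alpha by simp
    ultimately show ?thesis unfolding Phi_def by (simp add: algebra_simps)
  qed
  moreover have "Phi c p \<le> Phi c m" "Phi c q \<le> Phi c m" using pm qm mp by auto
  moreover have "Phi c p \<le> Phi c q" using pm q by auto
  ultimately show False by simp
qed

definition argm :: "(nat \<Rightarrow> 'u \<Rightarrow> real) \<Rightarrow> 'u \<Rightarrow> real" where
  "argm c = (SOME p. p \<in> pdist \<and> (\<forall>q\<in>pdist. Phi c p \<le> Phi c q))"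

lemma argm: "argm c \<in> pdist" "\<And>q. q \<in> pdist \<Longrightarrow> Phi c (argm c) \<le> Phi c q"
proof -
  have "\<exists>p. p \<in> pdist \<and> (\<forall>q\<in>pdist. Phi c p \<le> Phi c q)"
    using Phi_min_ex by blast
  then have "argm c \<in> pdist \<and> (\<forall>q\<in>pdist. Phi c (argm c) \<le> Phi c q)"
    unfolding argm_def by (rule someI_ex)
  then show "argm c \<in> pdist" "\<And>q. q \<in> pdist \<Longrightarrow> Phi c (argm c) \<le> Phi c q" by auto
qed

lemma Phi_tendsto:
  assumes c: "\<And>k u. k < K \<Longrightarrow> (\<lambda>m. C m k u) \<longlonglongrightarrow> c k u"
    and P: "\<And>m. P m \<in> pdist" and l: "l \<in> pdist" and Pl: "\<And>u. (\<lambda>m. P m u) \<longlonglongrightarrow> l u"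
  shows "(\<lambda>m. Phi (C m) (P m)) \<longlonglongrightarrow> Phi c l"
proof -
  have "(\<lambda>m. LS (C m) (P m)) \<longlonglongrightarrow> LS c l"
    unfolding LS_def by (intro tendsto_intros c Pl) auto
  then have 1: "(\<lambda>m. ln (LS (C m) (P m))) \<longlonglongrightarrow> ln (LS c l)"
    using LS_pos[of c l] by (intro tendsto_intros) auto
  have "P \<longlonglongrightarrow> l" using Pl by (simp add: tendsto_fun_iff)
  then have 2: "(\<lambda>m. \<nu> (P m)) \<longlonglongrightarrow> \<nu> l"
    by (rule continuous_on_tendsto_compose[OF nu_cont _ l]) (use P in simp)
  show ?thesis unfolding Phi_def by (intro tendsto_intros 1 2)
qed

lemma argm_subseq:
  assumes c: "\<And>k u. k < K \<Longrightarrow> (\<lambda>m. C m k u) \<longlonglongrightarrow> c k u"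
  shows "\<exists>h. strict_mono h \<and> (\<forall>u. (\<lambda>m. argm (C (h m)) u) \<longlonglongrightarrow> argm c u)"
proof -
  obtain h l where h: "strict_mono h" and hl: "\<forall>u\<in>UNIV. (\<lambda>m. argm (C (h m)) u) \<longlonglongrightarrow> l u"
    using bw_finite[of UNIV "\<lambda>m. argm (C m)" 1] argm(1) pdist_nonneg pdist_le1 by fastforce
  have lp: "l \<in> pdist"
    by (rule tendsto_pdist_closed[of "\<lambda>m. argm (C (h m))"]) (use argm(1) hl in auto)
  have ch: "(\<lambda>m. C (h m) k u) \<longlonglongrightarrow> c k u" if "k < K" for k u
    using LIMSEQ_subseq_LIMSEQ[OF c[OF that] h] by (simp add: o_def)
  have "Phi c l \<le> Phi c q" if q: "q \<in> pdist" for q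
  proof (rule LIMSEQ_le)
    show "(\<lambda>m. Phi (C (h m)) (argm (C (h m)))) \<longlonglongrightarrow> Phi c l"
      by (rule Phi_tendsto[OF ch argm(1) lp]) (use hl in auto)
    show "(\<lambda>m. Phi (C (h m)) q) \<longlonglongrightarrow> Phi c q"
      by (rule Phi_tendsto[OF ch q q]) auto
    show "\<exists>N. \<forall>n\<ge>N. Phi (C (h n)) (argm (C (h n))) \<le> Phi (C (h n)) q"
      using argm(2)[OF q] by blast
  qed
  then have "l = argm c"
    by (intro Phi_unique[OF lp argm(1)]) (auto intro: argm(2))
  then show ?thesis using h hl by auto
qed

end

lemma tendsto_by_bound:
  fixes g :: "nat \<Rightarrow> real"
  assumes "\<And>m. \<bar>g m - g0\<bar> \<le> L * D m" and "D \<longlonglongrightarrow> 0"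
  shows "g \<longlonglongrightarrow> g0"
proof (rule LIM_zero_cancel, rule Lim_null_comparison)
  show "\<forall>\<^sub>F m in sequentially. norm (g m - g0) \<le> L * D m" using assms(1) by simp
  show "(\<lambda>m. L * D m) \<longlonglongrightarrow> 0" using tendsto_mult_right_zero[OF assms(2)] by simp
qed

lemma dTV_tendsto:
  assumes "\<And>a. (\<lambda>m. M m a) \<longlonglongrightarrow> M0 a"
  shows "(\<lambda>m. dTV (M m) M0) \<longlonglongrightarrow> 0"
proof -
  have "(\<lambda>m. (1/2) * (\<Sum>a\<in>UNIV. \<bar>M m a - M0 a\<bar>)) \<longlonglongrightarrow> (1/2) * (\<Sum>a\<in>UNIV. \<bar>M0 a - M0 a\<bar>)"
    by (intro tendsto_intros assms)
  then show ?thesis by (simp add: dTV_def)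
qed

locale mfg = rq K w \<tau> \<alpha> \<nu> for K w \<tau> \<alpha> and \<nu> :: "('u::finite \<Rightarrow> real) \<Rightarrow> real" +
  fixes T :: nat and f :: "nat \<Rightarrow> 'x::finite \<Rightarrow> 'u \<Rightarrow> ('x \<Rightarrow> real) \<Rightarrow> 'x \<Rightarrow> real"
    and r :: "nat \<Rightarrow> 'x \<Rightarrow> 'u \<Rightarrow> ('x \<Rightarrow> real) \<Rightarrow> real" and Lf Lr :: real
    and \<mu>0 :: "nat \<Rightarrow> 'x \<Rightarrow> real"
  assumes f_dist: "\<And>t x u \<mu>. t < T \<Longrightarrow> \<mu> \<in> pdist \<Longrightarrow> f t x u \<mu> \<in> pdist"
    and f_Lip: "\<And>t x u \<mu> \<mu>'. t < T \<Longrightarrow> \<mu> \<in> pdist \<Longrightarrow> \<mu>' \<in> pdist \<Longrightarrow>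
        (\<Sum>x'\<in>UNIV. \<bar>f t x u \<mu> x' - f t x u \<mu>' x'\<bar>) \<le> Lf * dTV \<mu> \<mu>'"
    and r_Lip: "\<And>t x u \<mu> \<mu>'. t < T \<Longrightarrow> \<mu> \<in> pdist \<Longrightarrow> \<mu>' \<in> pdist \<Longrightarrow>
        \<bar>r t x u \<mu> - r t x u \<mu>'\<bar> \<le> Lr * dTV \<mu> \<mu>'"
    and mu0: "\<And>k. k < K \<Longrightarrow> \<mu>0 k \<in> pdist"
begin

lemma policyD: "policy T \<pi> \<Longrightarrow> t < T \<Longrightarrow> \<pi> t x \<in> pdist"
  by (simp add: policy_def decision_rule_def)

lemma flow_pdist:
  assumes pol: "policy T \<pi>" and m: "m \<in> pdist"
  shows "t \<le> T \<Longrightarrow> mf_flow f \<pi> m t \<in> pdist"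
proof (induction t)
  case 0
  then show ?case using m by simp
next
  case (Suc t)
  then have t: "t < T" by simp
  define \<mu> where "\<mu> = mf_flow f \<pi> m t"
  have \<mu>: "\<mu> \<in> pdist" using Suc t unfolding \<mu>_def by simp
  have fd: "f t x u \<mu> \<in> pdist" for x u using f_dist[OF t \<mu>] .
  have pd: "\<pi> t x \<in> pdist" for x using policyD[OF pol t] .
  have nn: "0 \<le> mf_flow f \<pi> m (Suc t) x'" for x'
    unfolding mf_flow.simps \<mu>_def[symmetric]
    by (intro sum_nonneg mult_nonneg_nonneg) (auto intro: pdist_nonneg fd pd \<mu>)
  have "(\<Sum>x'\<in>UNIV. mf_flow f \<pi> m (Suc t) x')
      = (\<Sum>x'\<in>UNIV. \<Sum>x\<in>UNIV. \<Sum>u\<in>UNIV. f t x u \<mu> x' * \<pi> t x u * \<mu> x)"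
    by (simp add: \<mu>_def)
  also have "\<dots> = (\<Sum>x\<in>UNIV. \<Sum>x'\<in>UNIV. \<Sum>u\<in>UNIV. f t x u \<mu> x' * \<pi> t x u * \<mu> x)"
    by (rule sum.swap)
  also have "\<dots> = (\<Sum>x\<in>UNIV. \<Sum>u\<in>UNIV. \<Sum>x'\<in>UNIV. f t x u \<mu> x' * \<pi> t x u * \<mu> x)"
    by (intro sum.cong refl sum.swap)
  also have "\<dots> = (\<Sum>x\<in>UNIV. \<Sum>u\<in>UNIV. (\<Sum>x'\<in>UNIV. f t x u \<mu> x') * (\<pi> t x u * \<mu> x))"
    by (simp add: sum_distrib_right mult.assoc)
  also have "\<dots> = (\<Sum>x\<in>UNIV. \<Sum>u\<in>UNIV. \<pi> t x u * \<mu> x)"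
    using fd by (simp add: pdist_sum)
  also have "\<dots> = (\<Sum>x\<in>UNIV. (\<Sum>u\<in>UNIV. \<pi> t x u) * \<mu> x)"
    by (simp add: sum_distrib_right)
  also have "\<dots> = 1"
    using pd \<mu> by (simp add: pdist_sum)
  finally show ?case using nn by (simp add: pdist_def)
qed

lemma f_conv:
  assumes t: "t < T" and M: "\<And>m. M m \<in> pdist" and M0: "M0 \<in> pdist"
    and c: "\<And>a. (\<lambda>m. M m a) \<longlonglongrightarrow> M0 a"
  shows "(\<lambda>m. f t x u (M m) x') \<longlonglongrightarrow> f t x u M0 x'"
proof (rule tendsto_by_bound)
  show "\<bar>f t x u (M m) x' - f t x u M0 x'\<bar> \<le> Lf * dTV (M m) M0" for m
  proof -
    have "\<bar>f t x u (M m) x' - f t x u M0 x'\<bar> \<le> (\<Sum>y\<in>UNIV. \<bar>f t x u (M m) y - f t x u M0 y\<bar>)"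
      by (rule member_le_sum) auto
    also have "\<dots> \<le> Lf * dTV (M m) M0" by (rule f_Lip[OF t M M0])
    finally show ?thesis .
  qed
  show "(\<lambda>m. dTV (M m) M0) \<longlonglongrightarrow> 0" by (rule dTV_tendsto[OF c])
qed

lemma r_conv:
  assumes t: "t < T" and M: "\<And>m. M m \<in> pdist" and M0: "M0 \<in> pdist"
    and c: "\<And>a. (\<lambda>m. M m a) \<longlonglongrightarrow> M0 a"
  shows "(\<lambda>m. r t x u (M m)) \<longlonglongrightarrow> r t x u M0"
proof (rule tendsto_by_bound)
  show "\<bar>r t x u (M m) - r t x u M0\<bar> \<le> Lr * dTV (M m) M0" for m
    by (rule r_Lip[OF t M M0])
  show "(\<lambda>m. dTV (M m) M0) \<longlonglongrightarrow> 0" by (rule dTV_tendsto[OF c])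
qed

lemma flow_conv:
  assumes P: "\<And>m. policy T (P m)" and pol: "policy T \<pi>"
    and Pc: "\<And>t x u. t < T \<Longrightarrow> (\<lambda>m. P m t x u) \<longlonglongrightarrow> \<pi> t x u"
    and m0: "m0 \<in> pdist"
  shows "t \<le> T \<Longrightarrow> (\<lambda>m. mf_flow f (P m) m0 t x) \<longlonglongrightarrow> mf_flow f \<pi> m0 t x"
proof (induction t arbitrary: x)
  case 0
  then show ?case by simp
next
  case (Suc t)
  then have t: "t < T" by simp
  have M: "mf_flow f (P m) m0 t \<in> pdist" for m using flow_pdist[OF P m0] t by simp
  have M0: "mf_flow f \<pi> m0 t \<in> pdist" using flow_pdist[OF pol m0] t by simp
  have c: "(\<lambda>m. mf_flow f (P m) m0 t a) \<longlonglongrightarrow> mf_flow f \<pi> m0 t a" for a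
    using Suc t by simp
  show ?case
    unfolding mf_flow.simps
    by (intro tendsto_intros f_conv[OF t M M0 c] c Pc[OF t])
qed

lemma Q_conv:
  assumes P: "\<And>m. policy T (P m)" and pol: "policy T \<pi>"
    and Pc: "\<And>t x u. t < T \<Longrightarrow> (\<lambda>m. P m t x u) \<longlonglongrightarrow> \<pi> t x u"
    and Mu: "\<And>m s. s \<le> T \<Longrightarrow> Mu m s \<in> pdist" and Mu0: "\<And>s. s \<le> T \<Longrightarrow> Mu0 s \<in> pdist"
    and Muc: "\<And>s a. s \<le> T \<Longrightarrow> (\<lambda>m. Mu m s a) \<longlonglongrightarrow> Mu0 s a"
  shows "t + j < T \<Longrightarrow> (\<lambda>m. Qk f r (P m) (Mu m) t j x u) \<longlonglongrightarrow> Qk f r \<pi> Mu0 t j x u"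
proof (induction j arbitrary: t x u)
  case 0
  then have t: "t < T" by simp
  show ?case
    using r_conv[OF t, of "\<lambda>m. Mu m t" "Mu0 t"] Mu Mu0 Muc t by simp
next
  case (Suc j)
  then have t: "t < T" and t1: "Suc t < T" and tj: "Suc t + j < T" by simp_all
  have rc: "(\<lambda>m. r t x u (Mu m t)) \<longlonglongrightarrow> r t x u (Mu0 t)"
    using r_conv[OF t, of "\<lambda>m. Mu m t" "Mu0 t"] Mu Mu0 Muc t by simp
  have fc: "(\<lambda>m. f t x u (Mu m t) x') \<longlonglongrightarrow> f t x u (Mu0 t) x'" for x'
    using f_conv[OF t, of "\<lambda>m. Mu m t" "Mu0 t"] Mu Mu0 Muc t by simp
  show ?case
    unfolding Qk.simps
    by (intro tendsto_intros rc fc Pc[OF t1] Suc.IH[OF tj])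
qed

lemma Q_indep:
  "(\<And>s. s > t \<Longrightarrow> \<pi> s = \<pi>' s) \<Longrightarrow> Qk f r \<pi> \<mu> t j x u = Qk f r \<pi>' \<mu> t j x u"
proof (induction j arbitrary: t x u)
  case 0
  then show ?case by simp
next
  case (Suc j)
  have "Qk f r \<pi> \<mu> (Suc t) j x' u' = Qk f r \<pi>' \<mu> (Suc t) j x' u'" for x' u'
    by (rule Suc.IH) (use Suc.prems in auto)
  moreover have "\<pi> (Suc t) = \<pi>' (Suc t)" using Suc.prems by simp
  ultimately show ?case by simp
qed

definition nrm :: "('u \<Rightarrow> real) \<Rightarrow> 'u \<Rightarrow> real" where
  "nrm v = (\<lambda>u. (v u + max 0 (1 - (\<Sum>u'\<in>UNIV. v u')) / real CARD('u))
      / ((\<Sum>u'\<in>UNIV. v u') + max 0 (1 - (\<Sum>u'\<in>UNIV. v u'))))"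

lemma nrm_pdist:
  assumes "\<And>u. 0 \<le> v u"
  shows "nrm v \<in> pdist"
proof -
  define s where "s = (\<Sum>u'\<in>UNIV. v u')"
  define c where "c = max 0 (1 - s)"
  have D: "s + c \<ge> 1" unfolding c_def by simp
  have cn: "0 \<le> c" unfolding c_def by simp
  have card: "real CARD('u) > 0" by simp
  have "(\<Sum>u\<in>UNIV. v u + c / real CARD('u)) = s + c"
    using card by (simp add: sum.distrib s_def)
  then have "(\<Sum>u\<in>UNIV. (v u + c / real CARD('u)) / (s + c)) = 1"
    using D by (simp add: sum_divide_distrib[symmetric])
  moreover have "0 \<le> (v u + c / real CARD('u)) / (s + c)" for u
  proof -
    have "0 \<le> v u + c / real CARD('u)" using assms[of u] cn card by simp
    moreover have "0 \<le> s + c" using D by linarith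
    ultimately show ?thesis by (rule divide_nonneg_nonneg)
  qed
  ultimately show ?thesis unfolding pdist_def nrm_def s_def[symmetric] c_def[symmetric] by auto
qed

lemma nrm_id: "v \<in> pdist \<Longrightarrow> nrm v = v"
  by (simp add: nrm_def pdist_sum)

lemma nrm_conv:
  assumes "\<And>u. (\<lambda>m. V m u) \<longlonglongrightarrow> v u"
  shows "(\<lambda>m. nrm (V m) u) \<longlonglongrightarrow> nrm v u"
proof -
  have ne: "(\<Sum>u'\<in>UNIV. v u') + max 0 (1 - (\<Sum>u'\<in>UNIV. v u')) \<noteq> 0" by linarith
  show ?thesis unfolding nrm_def
    by (intro tendsto_intros assms ne) simp
qed

end

context mfg
begin

lemma rqe_cost_eq:
  "rqe_cost T f r K w \<tau> \<alpha> \<nu> t x \<pi>' S = Phi (\<lambda>k u. Qfun T f r \<pi>' (S k) t x u) (\<pi>' t x)"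
  by (simp add: rqe_cost_def Phi_def LS_def)

lemma exists_eq: "\<exists>\<pi> S. \<pi> \<in> B_opt T f r K w \<tau> \<alpha> \<nu> S \<and> B_prop f K \<mu>0 \<pi> = S"
proof -
  define I where "I = {..<T} \<times> (UNIV::'x set) \<times> (UNIV::'u set)"
  have fin: "finite I" unfolding I_def by simp
  define n where "n = card I"
  obtain e where e: "bij_betw e {..<n} I"
    using ex_bij_betw_nat_finite[OF fin] by (auto simp: n_def atLeast0LessThan)
  define ie where "ie = inv_into {..<n} e"
  have ie_in: "ie (t,x,u) < n" if "t < T" for t x u
  proof -
    have "bij_betw ie I {..<n}" unfolding ie_def by (rule bij_betw_inv_into[OF e])
    moreover have "(t,x,u) \<in> I" using that by (simp add: I_def)
    ultimately show ?thesis by (auto dest: bij_betwE)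
  qed
  have e_ie: "e (ie (t,x,u)) = (t,x,u)" if "t < T" for t x u
    unfolding ie_def by (rule bij_betw_inv_into_right[OF e]) (use that in \<open>simp add: I_def\<close>)
  have e_in: "e i \<in> I" if "i < n" for i
    using e that by (auto dest: bij_betwE)
  define Pol where "Pol y = (\<lambda>t x. nrm (\<lambda>u. y (ie (t,x,u))))" for y :: "nat \<Rightarrow> real"
  define Sflow where "Sflow \<pi> = B_prop f K \<mu>0 \<pi>" for \<pi>
  define cv where "cv \<pi> t x = (\<lambda>k u. Qfun T f r \<pi> (Sflow \<pi> k) t x u)" for \<pi> t x
  define BR where "BR \<pi> = (\<lambda>t x. argm (cv \<pi> t x))" for \<pi>
  define F where "F y = (\<lambda>i. case e i of (t,x,u) \<Rightarrow> BR (Pol y) t x u)" for y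
  have PolP: "policy T (Pol y)" if y: "\<forall>i<n. 0 \<le> y i \<and> y i \<le> 1" for y
    unfolding policy_def decision_rule_def Pol_def
    by (auto intro!: nrm_pdist simp: y ie_in)
  have maps: "\<forall>i<n. 0 \<le> F y i \<and> F y i \<le> 1" for y
    unfolding F_def BR_def by (auto split: prod.splits simp: pdist_nonneg[OF argm(1)] pdist_le1[OF argm(1)])
  have cont: "\<exists>h. strict_mono h \<and> (\<lambda>k. F (Y (h k)) i) \<longlonglongrightarrow> F z i"
    if Y: "\<And>k. Y k \<in> {y. \<forall>i<n. 0 \<le> y i \<and> y i \<le> 1}" and z: "z \<in> {y. \<forall>i<n. 0 \<le> y i \<and> y i \<le> 1}"
      and Yc: "\<And>j. j < n \<Longrightarrow> (\<lambda>k. Y k j) \<longlonglongrightarrow> z j" and i: "i < n" for Y z i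
  proof -
    obtain t x u where eti: "e i = (t,x,u)" by (cases "e i") auto
    have t: "t < T" using e_in[OF i] eti by (simp add: I_def)
    have PY: "policy T (Pol (Y m))" for m using PolP Y by blast
    have Pz: "policy T (Pol z)" using PolP z by blast
    have Pc: "(\<lambda>m. Pol (Y m) t' x' u') \<longlonglongrightarrow> Pol z t' x' u'" if "t' < T" for t' x' u'
      unfolding Pol_def by (rule nrm_conv) (use Yc ie_in that in blast)
    have cvc: "(\<lambda>m. cv (Pol (Y m)) t x k u') \<longlonglongrightarrow> cv (Pol z) t x k u'" if k: "k < K" for k u'
    proof -
      have "(\<lambda>m. Qk f r (Pol (Y m)) (\<lambda>s. mf_flow f (Pol (Y m)) (\<mu>0 k) s) t (T - 1 - t) x u')
          \<longlonglongrightarrow> Qk f r (Pol z) (\<lambda>s. mf_flow f (Pol z) (\<mu>0 k) s) t (T - 1 - t) x u'"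
      proof (rule Q_conv[OF PY Pz Pc])
        show "\<And>m s. s \<le> T \<Longrightarrow> mf_flow f (Pol (Y m)) (\<mu>0 k) s \<in> pdist"
          using flow_pdist[OF PY mu0[OF k]] by blast
        show "\<And>s. s \<le> T \<Longrightarrow> mf_flow f (Pol z) (\<mu>0 k) s \<in> pdist"
          using flow_pdist[OF Pz mu0[OF k]] by blast
        show "\<And>s a. s \<le> T \<Longrightarrow> (\<lambda>m. mf_flow f (Pol (Y m)) (\<mu>0 k) s a) \<longlonglongrightarrow> mf_flow f (Pol z) (\<mu>0 k) s a"
          using flow_conv[OF PY Pz Pc mu0[OF k]] by blast
        show "t + (T - 1 - t) < T" using t by simp
      qed simp
      then show ?thesis
        using k by (simp add: cv_def Qfun_def Sflow_def B_prop_def)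
    qed
    obtain h where h: "strict_mono h" "\<forall>u. (\<lambda>m. argm (cv (Pol (Y (h m))) t x) u) \<longlonglongrightarrow> argm (cv (Pol z) t x) u"
      using argm_subseq[of "\<lambda>m. cv (Pol (Y m)) t x" "cv (Pol z) t x"] cvc by blast
    show ?thesis
      using h by (auto simp: F_def BR_def eti)
  qed
  obtain z where z: "z \<in> {y. \<forall>i<n. 0 \<le> y i \<and> y i \<le> 1}" and zf: "\<forall>i<n. F z i = z i"
    using brouwer_nat[of n F] maps cont by blast
  define \<pi> where "\<pi> = Pol z"
  have fixp: "\<pi> t x = BR \<pi> t x" if t: "t < T" for t x
  proof -
    have "(\<lambda>u. z (ie (t,x,u))) = BR \<pi> t x"
    proof
      fix u
      have "F z (ie (t,x,u)) = z (ie (t,x,u))" using zf ie_in[OF t] by blast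
      then show "z (ie (t,x,u)) = BR \<pi> t x u"
        by (simp add: F_def e_ie[OF t] \<pi>_def)
    qed
    then show ?thesis
      unfolding \<pi>_def Pol_def by (simp add: nrm_id BR_def argm(1) flip: \<pi>_def)
  qed
  have pol: "policy T \<pi>"
    unfolding \<pi>_def using PolP z by blast
  have "\<pi> \<in> B_opt T f r K w \<tau> \<alpha> \<nu> (Sflow \<pi>)"
    unfolding B_opt_def
  proof (intro CollectI conjI pol allI impI)
    fix t x d assume t: "t < T" and d: "decision_rule (d :: 'x \<Rightarrow> 'u \<Rightarrow> real)"
    have Qeq: "Qfun T f r (\<pi>(t := d)) (Sflow \<pi> k) t x u = Qfun T f r \<pi> (Sflow \<pi> k) t x u" for k u
      unfolding Qfun_def by (rule Q_indep) simp
    have Qeq': "(\<lambda>k. Qfun T f r (\<pi>(t := d)) (Sflow \<pi> k) t x) = (\<lambda>k. Qfun T f r \<pi> (Sflow \<pi> k) t x)"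
      by (intro ext) (rule Qeq)
    have "rqe_cost T f r K w \<tau> \<alpha> \<nu> t x \<pi> (Sflow \<pi>) = Phi (cv \<pi> t x) (BR \<pi> t x)"
      unfolding rqe_cost_eq cv_def using fixp[OF t] by simp
    also have "\<dots> \<le> Phi (cv \<pi> t x) (d x)"
      unfolding BR_def using d by (intro argm(2)) (simp add: decision_rule_def)
    also have "\<dots> = rqe_cost T f r K w \<tau> \<alpha> \<nu> t x (\<pi>(t := d)) (Sflow \<pi>)"
      unfolding rqe_cost_eq cv_def by (simp add: Qeq')
    finally show "rqe_cost T f r K w \<tau> \<alpha> \<nu> t x \<pi> (Sflow \<pi>) \<le> rqe_cost T f r K w \<tau> \<alpha> \<nu> t x (\<pi>(t := d)) (Sflow \<pi>)" .
  qed
  then show ?thesis unfolding Sflow_def by blast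
qed

end

theorem proposition1:
  fixes T K :: nat
    and f :: "nat \<Rightarrow> 'x::finite \<Rightarrow> 'u::finite \<Rightarrow> ('x \<Rightarrow> real) \<Rightarrow> 'x \<Rightarrow> real"
    and r :: "nat \<Rightarrow> 'x \<Rightarrow> 'u \<Rightarrow> ('x \<Rightarrow> real) \<Rightarrow> real"
    and Rmax Lf Lr \<tau> \<alpha> :: real
    and \<mu>0 :: "nat \<Rightarrow> 'x \<Rightarrow> real"
    and w :: "nat \<Rightarrow> real"
    and \<nu> :: "('u \<Rightarrow> real) \<Rightarrow> real"
  assumes T: "T \<ge> 1"
    and f_dist: "\<And>t x u \<mu>. t < T \<Longrightarrow> \<mu> \<in> pdist \<Longrightarrow> f t x u \<mu> \<in> pdist"
    and r_bound: "\<And>t x u \<mu>. t < T \<Longrightarrow> \<mu> \<in> pdist \<Longrightarrow> \<bar>r t x u \<mu>\<bar> \<le> Rmax"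
    and Lf: "Lf > 0" and Lr: "Lr > 0"
    and f_Lip: "\<And>t x u \<mu> \<mu>'. t < T \<Longrightarrow> \<mu> \<in> pdist \<Longrightarrow> \<mu>' \<in> pdist \<Longrightarrow>
        (\<Sum>x'\<in>UNIV. \<bar>f t x u \<mu> x' - f t x u \<mu>' x'\<bar>) \<le> Lf * dTV \<mu> \<mu>'"
    and r_Lip: "\<And>t x u \<mu> \<mu>'. t < T \<Longrightarrow> \<mu> \<in> pdist \<Longrightarrow> \<mu>' \<in> pdist \<Longrightarrow>
        \<bar>r t x u \<mu> - r t x u \<mu>'\<bar> \<le> Lr * dTV \<mu> \<mu>'"
    and K: "K \<ge> 1"
    and mu0: "\<And>k. k < K \<Longrightarrow> \<mu>0 k \<in> pdist"
    and mu0_inj: "inj_on \<mu>0 {..<K}"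
    and w_nonneg: "\<And>k. k < K \<Longrightarrow> w k \<ge> 0"
    and w_sum: "(\<Sum>k<K. w k) = 1"
    and tau: "\<tau> > 0" and alpha: "\<alpha> > 0"
    and nu_strict_convex: "\<And>p q a. p \<in> pdist \<Longrightarrow> q \<in> pdist \<Longrightarrow> p \<noteq> q \<Longrightarrow> 0 < a \<Longrightarrow> a < 1 \<Longrightarrow>
        \<nu> (\<lambda>u. a * p u + (1 - a) * q u) < a * \<nu> p + (1 - a) * \<nu> q"
    and nu_cont: "continuous_on pdist \<nu>"
  shows "\<exists>\<pi> S. \<pi> \<in> B_opt T f r K w \<tau> \<alpha> \<nu> S \<and> B_prop f K \<mu>0 \<pi> = S"
  proof -
  interpret mfg K w \<tau> \<alpha> \<nu> T f r Lf Lr \<mu>0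
    by (intro mfg.intro rq.intro mfg_axioms.intro)
      (assumption | rule w_nonneg w_sum tau alpha nu_strict_convex nu_cont f_dist f_Lip r_Lip mu0)+
  show ?thesis by (rule exists_eq)
qed

end
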